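(* Let $n\ge1$ and let $A$ be a set equipped with an $(n+1)$-ary operation $\theta$, binary operations $\alpha_1,\dots,\alpha_n$ and an element $e\in A$ such that for all $a,b\in A$: $$\alpha_i(a,a)=e\ (1\le i\le n),\qquad \theta(\alpha_1(a,b),\dots,\alpha_n(a,b),b)=a,$$ and such that $\theta$ is 2-associative, i.e. for all $a_1,\dots,a_n,b_1,\dots,b_n,c\in A$, $$\theta(a_1,\dots,a_n,\theta(b_1,\dots,b_n,c))=\theta(\theta(a_1,\dots,a_n,b_1),\dots,\theta(a_1,\dots,a_n,b_n),c).$$ Then $A$ with the binary operation $ab=\theta(a,a,\dots,a,b)$ is a group, and for every $b\in A$, $$b^{-1}=\theta\big(\alpha_1(e,\theta(b,b,\dots,b)),\alpha_2(e,\theta(b,b,\dots,b)),\dots,\alpha_n(e,\theta(b,b,\dots,b)),b\big).$$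
   Context: Here $\theta(b,b,\dots,b)$ denotes $\theta$ applied to $n+1$ copies of $b$, and $\theta(a,a,\dots,a,b)$ denotes $\theta$ with $a$ in the first $n$ arguments and $b$ in the last. *)

theory Defs
  imports "HOL-Algebra.Group"
begin

definition theta_mult :: "nat \<Rightarrow> ('a list \<Rightarrow> 'a) \<Rightarrow> 'a \<Rightarrow> 'a \<Rightarrow> 'a" where
  "theta_mult n \<theta> a b = \<theta> (replicate n a @ [b])"

end

theory Submission
  imports Defs
begin

theorem proposition4p3:
  fixes A :: "'a set" and \<theta> :: "'a list \<Rightarrow> 'a" and \<alpha> :: "nat \<Rightarrow> 'a \<Rightarrow> 'a \<Rightarrow> 'a"
    and e :: 'a and n :: nat
  assumes "n \<ge> 1"
    and "e \<in> A"
    and "\<forall>xs. length xs = Suc n \<and> set xs \<subseteq> A \<longrightarrow> \<theta> xs \<in> A"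
    and "\<forall>i<n. \<forall>a\<in>A. \<forall>b\<in>A. \<alpha> i a b \<in> A"
    and "\<forall>i<n. \<forall>a\<in>A. \<alpha> i a a = e"
    and "\<forall>a\<in>A. \<forall>b\<in>A. \<theta> (map (\<lambda>i. \<alpha> i a b) [0..<n] @ [b]) = a"
    and "\<forall>as bs c. length as = n \<and> length bs = n \<and> set as \<subseteq> A \<and> set bs \<subseteq> A \<and> c \<in> A \<longrightarrow>
           \<theta> (as @ [\<theta> (bs @ [c])]) = \<theta> (map (\<lambda>b. \<theta> (as @ [b])) bs @ [c])"
  shows "\<exists>u. group \<lparr>carrier = A, mult = theta_mult n \<theta>, one = u\<rparr> \<and>
           (\<forall>b\<in>A. inv\<^bsub>\<lparr>carrier = A, mult = theta_mult n \<theta>, one = u\<rparr>\<^esub> b =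
              \<theta> (map (\<lambda>i. \<alpha> i e (\<theta> (replicate (Suc n) b))) [0..<n] @ [b]))"
proof -
  note A = assms
  have srep: "set (replicate n x) \<subseteq> A" if "x \<in> A" for x
    using that by (induct n) auto
  define G where "G = \<lparr>carrier = A, mult = theta_mult n \<theta>, one = e\<rparr>"
  have cl: "theta_mult n \<theta> x y \<in> A" if "x \<in> A" "y \<in> A" for x y
    using A(3)[rule_format, of "replicate n x @ [y]"] that A(1) by (auto simp: theta_mult_def)
  have as: "theta_mult n \<theta> (theta_mult n \<theta> x y) z = theta_mult n \<theta> x (theta_mult n \<theta> y z)"
    if "x \<in> A" "y \<in> A" "z \<in> A" for x y z
  proof -
    have "\<theta> (replicate n x @ [\<theta> (replicate n y @ [z])]) =
          \<theta> (map (\<lambda>b. \<theta> (replicate n x @ [b])) (replicate n y) @ [z])"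
      using A(7)[rule_format, of "replicate n x" "replicate n y" z] that srep by simp
    then show ?thesis by (simp add: theta_mult_def)
  qed
  have lone: "theta_mult n \<theta> e x = x" if "x \<in> A" for x
  proof -
    have "map (\<lambda>i. \<alpha> i x x) [0..<n] = replicate n e"
      using A(5) that by (simp add: list_eq_iff_nth_eq)
    then show ?thesis using A(6)[rule_format, OF that that] by (simp add: theta_mult_def)
  qed
  define inv' where "inv' b = \<theta> (map (\<lambda>i. \<alpha> i e (\<theta> (replicate (Suc n) b))) [0..<n] @ [b])" for b
  have bb: "\<theta> (replicate (Suc n) b) \<in> A" if "b \<in> A" for b
    using A(3)[rule_format, of "replicate (Suc n) b"] that srep by simp
  have asA: "set (map (\<lambda>i. \<alpha> i e (\<theta> (replicate (Suc n) b))) [0..<n]) \<subseteq> A" if "b \<in> A" for b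
    using A(4) A(2) bb[OF that] by auto
  have invA: "inv' b \<in> A" if "b \<in> A" for b
    using A(3)[rule_format, of "map (\<lambda>i. \<alpha> i e (\<theta> (replicate (Suc n) b))) [0..<n] @ [b]"] asA[OF that] that unfolding inv'_def
    by simp
  have linv: "theta_mult n \<theta> (inv' b) b = e" if "b \<in> A" for b
  proof -
    let ?as = "map (\<lambda>i. \<alpha> i e (\<theta> (replicate (Suc n) b))) [0..<n]"
    have asA: "set ?as \<subseteq> A" using asA[OF that] .
    have "\<theta> (?as @ [\<theta> (replicate n b @ [b])]) =
          \<theta> (map (\<lambda>x. \<theta> (?as @ [x])) (replicate n b) @ [b])"
      using A(7)[rule_format, of ?as "replicate n b" b] asA that srep by simp
    moreover have "\<theta> (?as @ [\<theta> (replicate n b @ [b])]) = e"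
      using A(6) A(2) bb[OF that] by (simp add: replicate_append_same[symmetric])
    ultimately show ?thesis by (simp add: theta_mult_def inv'_def)
  qed
  have grp: "group G"
    unfolding G_def
    apply (rule groupI)
    using cl as lone A(2) invA linv by auto (metis invA linv)
  have "\<forall>b\<in>A. inv\<^bsub>G\<^esub> b = inv' b"
  proof
    fix b assume b: "b \<in> A"
    show "inv\<^bsub>G\<^esub> b = inv' b"
      using group.inv_equality[OF grp, of "inv' b" b] linv[OF b] invA[OF b] b
      by (simp add: G_def)
  qed
  then show ?thesis using grp unfolding G_def inv'_def by blast
qed

end
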